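(* Let $G$ be a finite, simple, connected graph and let $v \in V(G)$ be a vertex that is not a cut vertex of $G$. Then $$\chi_{dd}(G)-1 \leq \chi_{dd}(G-v) \leq \chi_{dd}(G)+\deg(v)-1,$$ where $G-v$ is the graph obtained from $G$ by deleting $v$ and all edges incident with $v$, and $\deg(v)$ is the degree of $v$ in $G$.
   Context: All graphs are finite, undirected and simple. For a vertex $w$, $N(w)$ is its open neighborhood and $N[w]=N(w)\cup\{w\}$ its closed neighborhood. A vertex $w$ dominates a set $S$ of vertices if $S \subseteq N[w]$. A domination coloring of a graph $H$ is a proper vertex coloring of $H$ (adjacent vertices receive different colors; a color class is the set of all vertices receiving a given color) such that every vertex of $H$ dominates at least one color class (possibly its own class), and every color class is dominated by at least one vertex of $H$. The domination chromatic number $\chi_{dd}(H)$ is the minimum number of color classes in a domination coloring of $H$. *)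

theory Defs
  imports Main
begin

definition simple_graph :: "'a set \<Rightarrow> ('a \<Rightarrow> 'a \<Rightarrow> bool) \<Rightarrow> bool" where
  "simple_graph V E \<longleftrightarrow> finite V \<and> (\<forall>x y. E x y \<longrightarrow> x \<in> V \<and> y \<in> V)
     \<and> (\<forall>x y. E x y \<longrightarrow> E y x) \<and> (\<forall>x. \<not> E x x)"

definition reach :: "'a set \<Rightarrow> ('a \<Rightarrow> 'a \<Rightarrow> bool) \<Rightarrow> 'a \<Rightarrow> 'a \<Rightarrow> bool" where
  "reach V E = (\<lambda>x y. x \<in> V \<and> y \<in> V \<and> E x y)\<^sup>*\<^sup>*"

definition connected_graph :: "'a set \<Rightarrow> ('a \<Rightarrow> 'a \<Rightarrow> bool) \<Rightarrow> bool" where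
  "connected_graph V E \<longleftrightarrow> V \<noteq> {} \<and> (\<forall>u\<in>V. \<forall>w\<in>V. reach V E u w)"

definition components :: "'a set \<Rightarrow> ('a \<Rightarrow> 'a \<Rightarrow> bool) \<Rightarrow> 'a set set" where
  "components V E = V // {(x, y). x \<in> V \<and> y \<in> V \<and> reach V E x y}"

definition del_vertex_V :: "'a set \<Rightarrow> 'a \<Rightarrow> 'a set" where
  "del_vertex_V V v = V - {v}"

definition del_vertex_E :: "('a \<Rightarrow> 'a \<Rightarrow> bool) \<Rightarrow> 'a \<Rightarrow> 'a \<Rightarrow> 'a \<Rightarrow> bool" where
  "del_vertex_E E v = (\<lambda>x y. E x y \<and> x \<noteq> v \<and> y \<noteq> v)"

definition cut_vertex :: "'a set \<Rightarrow> ('a \<Rightarrow> 'a \<Rightarrow> bool) \<Rightarrow> 'a \<Rightarrow> bool" where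
  "cut_vertex V E v \<longleftrightarrow> v \<in> V \<and>
     card (components (del_vertex_V V v) (del_vertex_E E v)) > card (components V E)"

definition nbhd :: "'a set \<Rightarrow> ('a \<Rightarrow> 'a \<Rightarrow> bool) \<Rightarrow> 'a \<Rightarrow> 'a set" where
  "nbhd V E w = {u \<in> V. E w u}"

definition cnbhd :: "'a set \<Rightarrow> ('a \<Rightarrow> 'a \<Rightarrow> bool) \<Rightarrow> 'a \<Rightarrow> 'a set" where
  "cnbhd V E w = insert w (nbhd V E w)"

definition degree :: "'a set \<Rightarrow> ('a \<Rightarrow> 'a \<Rightarrow> bool) \<Rightarrow> 'a \<Rightarrow> nat" where
  "degree V E w = card (nbhd V E w)"

definition color_classes :: "'a set \<Rightarrow> ('a \<Rightarrow> nat) \<Rightarrow> 'a set set" where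
  "color_classes V c = (\<lambda>i. {x \<in> V. c x = i}) ` (c ` V)"

definition dominates :: "'a set \<Rightarrow> ('a \<Rightarrow> 'a \<Rightarrow> bool) \<Rightarrow> 'a \<Rightarrow> 'a set \<Rightarrow> bool" where
  "dominates V E w S \<longleftrightarrow> S \<subseteq> cnbhd V E w"

definition domination_coloring :: "'a set \<Rightarrow> ('a \<Rightarrow> 'a \<Rightarrow> bool) \<Rightarrow> ('a \<Rightarrow> nat) \<Rightarrow> bool" where
  "domination_coloring V E c \<longleftrightarrow>
     (\<forall>x\<in>V. \<forall>y\<in>V. E x y \<longrightarrow> c x \<noteq> c y)
   \<and> (\<forall>w\<in>V. \<exists>C\<in>color_classes V c. dominates V E w C)
   \<and> (\<forall>C\<in>color_classes V c. \<exists>w\<in>V. dominates V E w C)"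

definition chi_dd :: "'a set \<Rightarrow> ('a \<Rightarrow> 'a \<Rightarrow> bool) \<Rightarrow> nat" where
  "chi_dd V E = (LEAST k. \<exists>c. domination_coloring V E c \<and> card (color_classes V c) = k)"

end

theory Submission
  imports Defs
begin

lemma card_cc: "finite V \<Longrightarrow> card (color_classes V c) = card (c ` V)"
  unfolding color_classes_def
  by (rule card_image) (auto simp: inj_on_def)

lemma dc_iff: "domination_coloring V E c \<longleftrightarrow>
     (\<forall>x\<in>V. \<forall>y\<in>V. E x y \<longrightarrow> c x \<noteq> c y)
   \<and> (\<forall>w\<in>V. \<exists>i\<in>c ` V. {x\<in>V. c x = i} \<subseteq> cnbhd V E w)
   \<and> (\<forall>i\<in>c ` V. \<exists>w\<in>V. {x\<in>V. c x = i} \<subseteq> cnbhd V E w)"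
  unfolding domination_coloring_def color_classes_def dominates_def by blast

lemma dc_exists:
  assumes "finite V" "\<forall>x. \<not> E x x"
  shows "\<exists>c. domination_coloring V E c"
proof -
  obtain f :: "'a \<Rightarrow> nat" and n where f: "inj_on f V"
    using finite_imp_inj_to_nat_seg[OF assms(1)] by blast
  have cl: "\<And>w. w \<in> V \<Longrightarrow> {x\<in>V. f x = f w} \<subseteq> cnbhd V E w"
    using f unfolding cnbhd_def inj_on_def by auto
  have "domination_coloring V E f"
    unfolding dc_iff
  proof (intro conjI ballI impI)
    fix x y assume "x \<in> V" "y \<in> V" "E x y"
    then show "f x \<noteq> f y" using f assms(2) unfolding inj_on_def by metis
  next
    fix w assume "w \<in> V" then show "\<exists>i\<in>f ` V. {x \<in> V. f x = i} \<subseteq> cnbhd V E w"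
      using cl by blast
  next
    fix i assume "i \<in> f ` V" then show "\<exists>w\<in>V. {x \<in> V. f x = i} \<subseteq> cnbhd V E w"
      using cl by blast
  qed
  then show ?thesis by blast
qed

lemma chi_le:
  assumes "finite V" "domination_coloring V E c"
  shows "chi_dd V E \<le> card (c ` V)"
  unfolding chi_dd_def using assms card_cc[OF assms(1)]
  by (intro Least_le) metis

lemma chi_att:
  assumes "finite V" "\<forall>x. \<not> E x x"
  shows "\<exists>c. domination_coloring V E c \<and> card (c ` V) = chi_dd V E"
proof -
  obtain c where c: "domination_coloring V E c" using dc_exists[of V E, OF assms] by blast
  have "\<exists>c'. domination_coloring V E c' \<and> card (color_classes V c') = chi_dd V E"
    unfolding chi_dd_def
    by (rule LeastI_ex) (use c in blast)
  then show ?thesis using card_cc[OF assms(1)] by metis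
qed

theorem theorem1:
  fixes V :: "'a set" and E :: "'a \<Rightarrow> 'a \<Rightarrow> bool" and v :: 'a
  assumes "simple_graph V E"
    and "connected_graph V E"
    and "v \<in> V"
    and "\<not> cut_vertex V E v"
  shows "int (chi_dd V E) - 1 \<le> int (chi_dd (del_vertex_V V v) (del_vertex_E E v))
       \<and> int (chi_dd (del_vertex_V V v) (del_vertex_E E v))
           \<le> int (chi_dd V E) + int (degree V E v) - 1"
proof -
  define V' where "V' = del_vertex_V V v"
  define E' where "E' = del_vertex_E E v"
  have fin: "finite V" and sym: "\<And>x y. E x y \<Longrightarrow> E y x" and irr: "\<forall>x. \<not> E x x"
    and inV: "\<And>x y. E x y \<Longrightarrow> x \<in> V \<and> y \<in> V"
    using assms(1) unfolding simple_graph_def by auto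
  have fin': "finite V'" using fin unfolding V'_def del_vertex_V_def by auto
  have irr': "\<forall>x. \<not> E' x x" using irr unfolding E'_def del_vertex_E_def by auto
  have V'eq: "V' = V - {v}" unfolding V'_def del_vertex_V_def by simp
  have E'eq: "\<And>x y. E' x y \<longleftrightarrow> E x y \<and> x \<noteq> v \<and> y \<noteq> v"
    unfolding E'_def del_vertex_E_def by simp
  have cn': "\<And>w. w \<in> V' \<Longrightarrow> cnbhd V' E' w = cnbhd V E w - {v}"
    unfolding cnbhd_def nbhd_def V'eq E'eq by auto
  obtain c' where c': "domination_coloring V' E' c'" "card (c' ` V') = chi_dd V' E'"
    using chi_att[of V' E', OF fin' irr'] by blast
  define M where "M = Suc (Max (c' ` V'))"
  have Mn: "M \<notin> c' ` V'"
  proof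
    assume "M \<in> c' ` V'"
    then have "M \<le> Max (c' ` V')" using fin' by auto
    then show False unfolding M_def by simp
  qed
  define d where "d = c'(v := M)"
  have dV: "d ` V = insert M (c' ` V')"
    unfolding d_def V'eq using assms(3) by auto
  have dcls: "\<And>i. i \<noteq> M \<Longrightarrow> {x\<in>V. d x = i} = {x\<in>V'. c' x = i}"
    unfolding d_def V'eq by auto
  have dclsM: "{x\<in>V. d x = M} = {v}"
    using Mn assms(3) unfolding d_def V'eq by auto
  have c'pr: "\<forall>x\<in>V'. \<forall>y\<in>V'. E' x y \<longrightarrow> c' x \<noteq> c' y"
    and c'd1: "\<forall>w\<in>V'. \<exists>i\<in>c' ` V'. {x\<in>V'. c' x = i} \<subseteq> cnbhd V' E' w"
    and c'd2: "\<forall>i\<in>c' ` V'. \<exists>w\<in>V'. {x\<in>V'. c' x = i} \<subseteq> cnbhd V' E' w"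
    using c'(1) unfolding dc_iff by auto
  have dd: "domination_coloring V E d"
    unfolding dc_iff
  proof (intro conjI ballI impI)
    fix x y assume xy: "x \<in> V" "y \<in> V" "E x y"
    show "d x \<noteq> d y"
    proof (cases "x = v \<or> y = v")
      case True
      then show ?thesis using xy irr Mn unfolding d_def V'eq by auto
    next
      case False
      then have "x \<in> V'" "y \<in> V'" "E' x y" "d x = c' x" "d y = c' y"
        using xy unfolding V'eq E'eq d_def by auto
      then show ?thesis using c'pr by metis
    qed
  next
    fix w assume w: "w \<in> V"
    show "\<exists>i\<in>d ` V. {x \<in> V. d x = i} \<subseteq> cnbhd V E w"
    proof (cases "w = v")
      case True
      have "{x\<in>V. d x = M} \<subseteq> cnbhd V E w" using dclsM True unfolding cnbhd_def by auto
      moreover have "M \<in> d ` V" using dV by auto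
      ultimately show ?thesis by blast
    next
      case False
      then have "w \<in> V'" using w V'eq by auto
      then obtain i where i: "i \<in> c' ` V'" "{x\<in>V'. c' x = i} \<subseteq> cnbhd V' E' w"
        using c'd1 by blast
      have "i \<noteq> M" using i Mn by auto
      then have "{x\<in>V. d x = i} \<subseteq> cnbhd V E w"
        using i(2) dcls cn'[OF \<open>w \<in> V'\<close>] by auto
      moreover have "i \<in> d ` V" using dV i(1) by auto
      ultimately show ?thesis by blast
    qed
  next
    fix i assume i: "i \<in> d ` V"
    show "\<exists>w\<in>V. {x \<in> V. d x = i} \<subseteq> cnbhd V E w"
    proof (cases "i = M")
      case True
      then show ?thesis using dclsM assms(3) unfolding cnbhd_def by auto
    next
      case False
      then have "i \<in> c' ` V'" using i dV by auto
      then obtain w where w: "w \<in> V'" "{x\<in>V'. c' x = i} \<subseteq> cnbhd V' E' w"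
        using c'd2 by blast
      then show ?thesis using dcls[OF False] cn'[OF w(1)] V'eq by auto
    qed
  qed
  have low: "chi_dd V E \<le> chi_dd V' E' + 1"
  proof -
    have "chi_dd V E \<le> card (d ` V)" by (rule chi_le[OF fin dd])
    also have "\<dots> \<le> card (c' ` V') + 1" unfolding dV using fin'
      by (simp add: card_insert_if)
    finally show ?thesis using c'(2) by simp
  qed
  obtain c where c: "domination_coloring V E c" "card (c ` V) = chi_dd V E"
    using chi_att[of V E, OF fin irr] by blast
  have cpr: "\<forall>x\<in>V. \<forall>y\<in>V. E x y \<longrightarrow> c x \<noteq> c y"
    and cd1: "\<forall>w\<in>V. \<exists>i\<in>c ` V. {x\<in>V. c x = i} \<subseteq> cnbhd V E w"
    and cd2: "\<forall>i\<in>c ` V. \<exists>w\<in>V. {x\<in>V. c x = i} \<subseteq> cnbhd V E w"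
    using c(1) unfolding dc_iff by auto
  obtain f :: "'a \<Rightarrow> nat" and n where f: "inj_on f V"
    using finite_imp_inj_to_nat_seg[OF fin] by blast
  define N where "N = nbhd V E v"
  have N: "\<And>u. u \<in> N \<longleftrightarrow> u \<in> V \<and> E v u" unfolding N_def nbhd_def by auto
  have vN: "v \<notin> N" using N irr by auto
  have NV': "N \<subseteq> V'" using N vN V'eq by auto
  define K where "K = Suc (Max (c ` V))"
  have Kc: "\<And>x. x \<in> V \<Longrightarrow> c x < K" unfolding K_def using fin
    by (simp add: le_imp_less_Suc)
  define e where "e = (\<lambda>u. if u \<in> N then K + f u else c u)"
  have eN: "\<And>x u. x \<in> V' \<Longrightarrow> u \<in> N \<Longrightarrow> e x = e u \<longleftrightarrow> x = u"
  proof -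
    fix x u assume x: "x \<in> V'" and u: "u \<in> N"
    show "e x = e u \<longleftrightarrow> x = u"
    proof (cases "x \<in> N")
      case True
      then show ?thesis using u f N unfolding e_def inj_on_def by auto
    next
      case False
      then have "e x < K" using Kc x V'eq unfolding e_def by auto
      then show ?thesis using u False unfolding e_def by auto
    qed
  qed
  have eclsN: "\<And>u. u \<in> N \<Longrightarrow> {x\<in>V'. e x = e u} = {u}"
    using eN NV' by auto
  have ecls: "\<And>u. u \<in> V' \<Longrightarrow> u \<notin> N \<Longrightarrow> {x\<in>V'. e x = e u} = {x\<in>V. c x = c u} - insert v N"
  proof -
    fix u assume u: "u \<in> V'" "u \<notin> N"
    show "{x\<in>V'. e x = e u} = {x\<in>V. c x = c u} - insert v N"
    proof (intro equalityI subsetI)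
      fix x assume x: "x \<in> {x\<in>V'. e x = e u}"
      then have "x \<notin> N" using eN[of u x] u by (metis (mono_tags, lifting) mem_Collect_eq)
      then show "x \<in> {x\<in>V. c x = c u} - insert v N" using x u unfolding e_def V'eq by auto
    next
      fix x assume "x \<in> {x\<in>V. c x = c u} - insert v N"
      then show "x \<in> {x\<in>V'. e x = e u}" using u unfolding e_def V'eq by auto
    qed
  qed
  have cn: "\<And>w. w \<in> V \<Longrightarrow> w \<in> cnbhd V E w" unfolding cnbhd_def by auto
  have de: "domination_coloring V' E' e"
    unfolding dc_iff
  proof (intro conjI ballI impI)
    fix x y assume xy: "x \<in> V'" "y \<in> V'" "E' x y"
    show "e x \<noteq> e y"
    proof (cases "y \<in> N")
      case True
      then show ?thesis using eN[OF xy(1) True] xy irr' by auto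
    next
      case False
      show ?thesis
      proof (cases "x \<in> N")
        case True
        then show ?thesis using eN[OF xy(2) True] xy irr' by auto
      next
        case False2: False
        then have "x \<in> V" "y \<in> V" "E x y" "e x = c x" "e y = c y"
          using False xy E'eq V'eq unfolding e_def by auto
        then show ?thesis using cpr by metis
      qed
    qed
  next
    fix w assume w: "w \<in> V'"
    show "\<exists>i\<in>e ` V'. {x \<in> V'. e x = i} \<subseteq> cnbhd V' E' w"
    proof (cases "w \<in> N")
      case True
      have "{x\<in>V'. e x = e w} \<subseteq> cnbhd V' E' w"
        unfolding eclsN[OF True] cnbhd_def by auto
      then show ?thesis using w by blast
    next
      case False
      have wv: "w \<noteq> v" "w \<in> V" using w V'eq by auto
      obtain i where i: "i \<in> c ` V" "{x\<in>V. c x = i} \<subseteq> cnbhd V E w"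
        using cd1 wv by blast
      show ?thesis
      proof (cases "\<exists>x\<in>V. c x = i \<and> x \<notin> insert v N")
        case True
        then obtain x where x: "x \<in> V" "c x = i" "x \<notin> insert v N" by blast
        then have x': "x \<in> V'" using V'eq by auto
        have "{y\<in>V'. e y = e x} \<subseteq> cnbhd V' E' w"
          using ecls[OF x' ] x i(2) cn'[OF w] by auto
        then show ?thesis using x' by blast
      next
        case False2: False
        obtain y where y: "y \<in> V" "c y = i" using i(1) by auto
        have "v \<notin> cnbhd V E w" using False wv N sym unfolding cnbhd_def nbhd_def by auto
        then have "y \<noteq> v" using y i(2) by auto
        then have yN: "y \<in> N" using False2 y by auto
        have "y \<in> cnbhd V' E' w" using y i(2) cn'[OF w] \<open>y \<noteq> v\<close> by auto
        then show ?thesis using eclsN[OF yN] NV' yN by auto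
      qed
    qed
  next
    fix i assume "i \<in> e ` V'"
    then obtain u where u: "u \<in> V'" "i = e u" by auto
    show "\<exists>w\<in>V'. {x \<in> V'. e x = i} \<subseteq> cnbhd V' E' w"
    proof (cases "u \<in> N")
      case True
      have "{x\<in>V'. e x = i} \<subseteq> cnbhd V' E' u"
        unfolding u(2) eclsN[OF True] cnbhd_def by auto
      then show ?thesis using u by blast
    next
      case False
      have uV: "u \<in> V" "u \<noteq> v" using u V'eq by auto
      obtain w where w: "w \<in> V" "{x\<in>V. c x = c u} \<subseteq> cnbhd V E w"
        using cd2 uV by blast
      have "u \<in> cnbhd V E w" using w uV by auto
      then have "w \<noteq> v" using False uV N unfolding cnbhd_def nbhd_def by auto
      then have w': "w \<in> V'" using w V'eq by auto
      show ?thesis using ecls[OF u(1) False] w cn'[OF w'] w' u(2) by blast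
    qed
  qed
  obtain i0 where i0: "i0 \<in> c ` V" "{x\<in>V. c x = i0} \<subseteq> cnbhd V E v"
    using cd1 assms(3) by blast
  have cnv: "cnbhd V E v = insert v N" unfolding cnbhd_def N_def by simp
  have s1: "c ` (V' - N) \<subseteq> c ` V - {i0}"
    using i0(2) cnv V'eq by auto
  have s2: "e ` V' \<subseteq> e ` N \<union> c ` (V' - N)"
    unfolding e_def by auto
  have finN: "finite N" using NV' fin' finite_subset by blast
  have "card (e ` V') \<le> card (e ` N \<union> c ` (V' - N))"
    by (rule card_mono) (use s2 finN fin' in auto)
  also have "\<dots> \<le> card (e ` N) + card (c ` (V' - N))" by (rule card_Un_le)
  also have "\<dots> \<le> card N + card (c ` V - {i0})"
    using card_image_le[OF finN, of e] card_mono[OF _ s1] fin by (meson add_mono finite_Diff finite_imageI)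
  also have "\<dots> = card N + (card (c ` V) - 1)" using i0(1) fin by simp
  finally have up0: "card (e ` V') \<le> card N + (card (c ` V) - 1)" .
  have "chi_dd V' E' \<le> card (e ` V')" by (rule chi_le[OF fin' de])
  moreover have "card (c ` V) \<ge> 1" using i0(1) fin by (metis One_nat_def Suc_leI card_gt_0_iff empty_iff finite_imageI)
  moreover have "degree V E v = card N" unfolding degree_def N_def by simp
  ultimately have up: "int (chi_dd V' E') \<le> int (chi_dd V E) + int (degree V E v) - 1"
    using up0 c(2) by linarith
  show ?thesis using low up unfolding V'_def E'_def by linarith
qed

end
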